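(* For every maximum-weight perfect matching $M^*$ of $G$, the induced allocation $X$ is EF1.
   Context: Setting: $n$ agents, $m$ real items $\mathcal M$, restricted additive valuations: there are values $v(g)>0$ with $v_{i,g}\in\{0,v(g)\}$ and $v_i(S)=\sum_{g\in S}v_{i,g}$; every real item is valued positively by at least one agent. Let $u_1>u_2>\dots>u_t$ be the distinct values in $\{v(g):g\in\mathcal M\}$ and $\mathcal M_f=\{g:v(g)=u_f\}$. Add a set $\mathcal M_d$ of $mn-m$ dummy items valued $0$ by all agents. The bipartite graph $G$ has left side $A=\{a_g: g\in\mathcal M\cup\mathcal M_d\}$ ($mn$ vertices) and right side $B=\{b_{(i,c)}: i\in[n], c\in[m]\}$; the set $\mathcal N_c=\{b_{(i,c)}:i\in[n]\}$ is called bucket $c$. Edges: for each real $g\in\mathcal M_f$, each agent $i$ with $v_{i,g}>0$ and each $c\in[m]$, an edge $(a_g,b_{(i,c)})$ of weight $-m^{t-f}\cdot c$; for each dummy $g$ and all $i,c$, an edge $(a_g,b_{(i,c)})$ of weight $0$; no other edges. The allocation induced by a perfect matching $M$ is $X_i=\{g\in\mathcal M: a_g \text{ matched in } M \text{ to some } b_{(i,c)}\}$. $X$ is EF1 if for all agents $i,j$ either $v_i(X_i)\ge v_i(X_j)$ or there is $g\in X_j$ with $v_i(X_i)\ge v_i(X_j\setminus\{g\})$. *)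

theory Defs
  imports Complex_Main
begin

text \<open>Agents are 0..<n, real items are 0..<m, dummy items are m..<m*n.
  Right vertices are pairs (i,c) with i < n and c in {1..m} (bucket c).\<close>

definition val :: "(nat \<Rightarrow> nat \<Rightarrow> bool) \<Rightarrow> (nat \<Rightarrow> real) \<Rightarrow> nat \<Rightarrow> nat \<Rightarrow> real" where
  "val likes vv i g = (if likes i g then vv g else 0)"

definition bundle_val :: "(nat \<Rightarrow> nat \<Rightarrow> bool) \<Rightarrow> (nat \<Rightarrow> real) \<Rightarrow> nat \<Rightarrow> nat set \<Rightarrow> real" where
  "bundle_val likes vv i S = (\<Sum>g\<in>S. val likes vv i g)"

text \<open>Number of distinct item values t, and the index f(g) of v(g) in the
  descending list u_1 > ... > u_t of distinct values (1-based).\<close>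
definition num_values :: "nat \<Rightarrow> (nat \<Rightarrow> real) \<Rightarrow> nat" where
  "num_values m vv = card (vv ` {0..<m})"

definition value_index :: "nat \<Rightarrow> (nat \<Rightarrow> real) \<Rightarrow> nat \<Rightarrow> nat" where
  "value_index m vv g = card {u \<in> vv ` {0..<m}. vv g \<le> u}"

definition left_vertices :: "nat \<Rightarrow> nat \<Rightarrow> nat set" where
  "left_vertices n m = {0..<m*n}"

definition right_vertices :: "nat \<Rightarrow> nat \<Rightarrow> (nat \<times> nat) set" where
  "right_vertices n m = {0..<n} \<times> {1..m}"

definition edges :: "nat \<Rightarrow> nat \<Rightarrow> (nat \<Rightarrow> nat \<Rightarrow> bool) \<Rightarrow> (nat \<times> (nat \<times> nat)) set" where
  "edges n m likes =
     {(g, (i, c)). g < m \<and> i < n \<and> c \<in> {1..m} \<and> likes i g}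
   \<union> {(g, (i, c)). m \<le> g \<and> g < m*n \<and> i < n \<and> c \<in> {1..m}}"

definition edge_weight :: "nat \<Rightarrow> (nat \<Rightarrow> real) \<Rightarrow> nat \<times> (nat \<times> nat) \<Rightarrow> real" where
  "edge_weight m vv e = (case e of (g, (i, c)) \<Rightarrow>
     (if g < m then - ((real m) ^ (num_values m vv - value_index m vv g) * real c) else 0))"

definition matching_weight :: "nat \<Rightarrow> (nat \<Rightarrow> real) \<Rightarrow> (nat \<times> (nat \<times> nat)) set \<Rightarrow> real" where
  "matching_weight m vv M = (\<Sum>e\<in>M. edge_weight m vv e)"

definition perfect_matching :: "nat \<Rightarrow> nat \<Rightarrow> (nat \<Rightarrow> nat \<Rightarrow> bool) \<Rightarrow> (nat \<times> (nat \<times> nat)) set \<Rightarrow> bool" where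
  "perfect_matching n m likes M \<longleftrightarrow>
     M \<subseteq> edges n m likes \<and>
     (\<forall>a\<in>left_vertices n m. \<exists>!b. (a, b) \<in> M) \<and>
     (\<forall>b\<in>right_vertices n m. \<exists>!a. (a, b) \<in> M)"

definition max_weight_perfect_matching ::
  "nat \<Rightarrow> nat \<Rightarrow> (nat \<Rightarrow> nat \<Rightarrow> bool) \<Rightarrow> (nat \<Rightarrow> real) \<Rightarrow> (nat \<times> (nat \<times> nat)) set \<Rightarrow> bool" where
  "max_weight_perfect_matching n m likes vv M \<longleftrightarrow>
     perfect_matching n m likes M \<and>
     (\<forall>M'. perfect_matching n m likes M' \<longrightarrow> matching_weight m vv M' \<le> matching_weight m vv M)"

definition induced_alloc :: "nat \<Rightarrow> (nat \<times> (nat \<times> nat)) set \<Rightarrow> nat \<Rightarrow> nat set" where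
  "induced_alloc m M i = {g. g < m \<and> (\<exists>c. (g, (i, c)) \<in> M)}"

definition EF1 :: "nat \<Rightarrow> (nat \<Rightarrow> nat \<Rightarrow> bool) \<Rightarrow> (nat \<Rightarrow> real) \<Rightarrow> (nat \<Rightarrow> nat set) \<Rightarrow> bool" where
  "EF1 n likes vv X \<longleftrightarrow>
     (\<forall>i<n. \<forall>j<n.
        bundle_val likes vv i (X i) \<ge> bundle_val likes vv i (X j) \<or>
        (\<exists>g\<in>X j. bundle_val likes vv i (X i) \<ge> bundle_val likes vv i (X j - {g})))"

end

theory Submission
  imports Defs
begin

lemma edges_iff: "(g,(i,c)) \<in> edges n m likes \<longleftrightarrow>
   i<n \<and> 1\<le>c \<and> c\<le>m \<and> ((g<m \<and> likes i g) \<or> (m \<le> g \<and> g < m*n))"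
  unfolding edges_def by auto

lemma lt_mn: "(g::nat) < m \<Longrightarrow> i < n \<Longrightarrow> g < m*n"
  by (cases n) auto

lemma pm_sub: "perfect_matching n m likes M \<Longrightarrow> M \<subseteq> edges n m likes"
  by (simp add: perfect_matching_def)

lemma pm_edges: "perfect_matching n m likes M \<Longrightarrow> (a,(i,c)) \<in> M \<Longrightarrow>
   i<n \<and> 1\<le>c \<and> c\<le>m \<and> ((a<m \<and> likes i a) \<or> (m \<le> a \<and> a < m*n))"
  using pm_sub edges_iff by blast

lemma pm_left_unique:
  assumes pm: "perfect_matching n m likes M" and "(a,b)\<in>M" "(a,b')\<in>M" shows "b=b'"
proof -
  obtain i c where b: "b=(i,c)" by (cases b)
  have e: "i<n \<and> ((a<m \<and> likes i a) \<or> (m \<le> a \<and> a < m*n))"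
    using pm_edges[OF pm, of a i c] assms(2) b by auto
  have "a < m*n" using e lt_mn[of a m i n] by blast
  then have "a \<in> left_vertices n m" unfolding left_vertices_def by simp
  then have "\<exists>!b. (a,b)\<in>M" using pm unfolding perfect_matching_def by (elim conjE) (rule bspec)
  then show ?thesis using assms(2,3) by (elim ex1E) blast
qed

lemma pm_right_unique:
  assumes pm: "perfect_matching n m likes M" and "(a,b)\<in>M" "(a',b)\<in>M" shows "a=a'"
proof -
  obtain i c where b: "b=(i,c)" by (cases b)
  have "b \<in> right_vertices n m"
    using pm_edges[OF pm, of a i c] assms b unfolding right_vertices_def by auto
  then have "\<exists>!a. (a,b)\<in>M" using pm unfolding perfect_matching_def by (elim conjE) (rule bspec)
  then show ?thesis using assms(2,3) by (elim ex1E) blast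
qed

lemma pm_right_ex:
  assumes pm: "perfect_matching n m likes M" and "i<n" "1\<le>c" "c\<le>m"
  shows "\<exists>a. (a,(i,c))\<in>M"
proof -
  have "(i,c) \<in> right_vertices n m" using assms unfolding right_vertices_def by auto
  then have "\<exists>!a. (a,(i,c))\<in>M" using pm unfolding perfect_matching_def by (elim conjE) (rule bspec)
  then show ?thesis by (elim ex1E) blast
qed

lemma edges_finite: "finite (edges n m likes)"
proof -
  have "edges n m likes \<subseteq> {0..<m*n} \<times> ({0..<n} \<times> {1..m})"
  proof
    fix x assume x: "x \<in> edges n m likes"
    obtain g i c where xe: "x = (g,(i,c))" by (cases x) auto
    then have "i<n \<and> 1\<le>c \<and> c\<le>m \<and> ((g<m \<and> likes i g) \<or> (m \<le> g \<and> g < m*n))"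
      using x edges_iff by blast
    then show "x \<in> {0..<m*n} \<times> ({0..<n} \<times> {1..m})" using xe lt_mn[of g m i n] by auto
  qed
  then show ?thesis by (rule finite_subset) auto
qed

lemma swap_pm:
  assumes pm: "perfect_matching n m likes M" and RM: "R \<subseteq> M" and AE: "A \<subseteq> edges n m likes"
    and fA: "fst`A = fst`R" and sA: "snd`A = snd`R" and ifst: "inj_on fst A" and isnd: "inj_on snd A"
  shows "perfect_matching n m likes ((M - R) \<union> A)" and "(M-R) \<inter> A = {}"
proof -
  have ME: "M \<subseteq> edges n m likes" using pm_sub[OF pm] .
  show disj: "(M-R) \<inter> A = {}"
  proof (rule ccontr)
    assume "(M-R) \<inter> A \<noteq> {}"
    then obtain a b where ab: "(a,b)\<in>M" "(a,b)\<notin>R" "(a,b)\<in>A" by auto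
    then have "a \<in> fst`R" using fA by force
    then obtain b0 where "(a,b0)\<in>R" by force
    then show False using ab pm_left_unique[OF pm, of a b b0] RM by auto
  qed
  have L: "\<forall>a\<in>left_vertices n m. \<exists>!b. (a, b) \<in> (M-R)\<union>A"
  proof
    fix a assume aL: "a\<in>left_vertices n m"
    show "\<exists>!b. (a, b) \<in> (M-R)\<union>A"
    proof (cases "a \<in> fst`R")
      case True
      then obtain b where bA: "(a,b)\<in>A" using fA by force
      obtain b0 where b0: "(a,b0)\<in>R" using True by force
      show ?thesis
      proof (rule ex1I[of _ b])
        show "(a,b)\<in>(M-R)\<union>A" using bA by auto
        fix b' assume "(a,b')\<in>(M-R)\<union>A"
        then show "b'=b"
        proof
          assume "(a,b')\<in>M-R"
          then show ?thesis using b0 RM pm_left_unique[OF pm, of a b' b0] by auto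
        next
          assume "(a,b')\<in>A"
          then show ?thesis using bA ifst unfolding inj_on_def by fastforce
        qed
      qed
    next
      case False
      have "\<exists>!b. (a,b)\<in>M" using aL pm unfolding perfect_matching_def by (elim conjE) (rule bspec)
      then obtain b where bM: "(a,b)\<in>M" by (elim ex1E) blast
      have "(a,b)\<notin>R" using False by force
      show ?thesis
      proof (rule ex1I[of _ b])
        show "(a,b)\<in>(M-R)\<union>A" using bM \<open>(a,b)\<notin>R\<close> by auto
        fix b' assume "(a,b')\<in>(M-R)\<union>A"
        then show "b'=b"
        proof
          assume "(a,b')\<in>M-R"
          then show ?thesis using bM pm_left_unique[OF pm, of a b' b] by auto
        next
          assume "(a,b')\<in>A"
          then have "a \<in> fst`A" by force
          then show ?thesis using False fA by auto
        qed
      qed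
    qed
  qed
  have Rt: "\<forall>b\<in>right_vertices n m. \<exists>!a. (a, b) \<in> (M-R)\<union>A"
  proof
    fix b assume bL: "b\<in>right_vertices n m"
    show "\<exists>!a. (a, b) \<in> (M-R)\<union>A"
    proof (cases "b \<in> snd`R")
      case True
      then obtain a where bA: "(a,b)\<in>A" using sA by force
      obtain a0 where a0: "(a0,b)\<in>R" using True by force
      show ?thesis
      proof (rule ex1I[of _ a])
        show "(a,b)\<in>(M-R)\<union>A" using bA by auto
        fix a' assume "(a',b)\<in>(M-R)\<union>A"
        then show "a'=a"
        proof
          assume "(a',b)\<in>M-R"
          then show ?thesis using a0 RM pm_right_unique[OF pm, of a' b a0] by auto
        next
          assume "(a',b)\<in>A"
          then show ?thesis using bA isnd unfolding inj_on_def by fastforce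
        qed
      qed
    next
      case False
      have "\<exists>!a. (a,b)\<in>M" using bL pm unfolding perfect_matching_def by (elim conjE) (rule bspec)
      then obtain a where bM: "(a,b)\<in>M" by (elim ex1E) blast
      have "(a,b)\<notin>R" using False by force
      show ?thesis
      proof (rule ex1I[of _ a])
        show "(a,b)\<in>(M-R)\<union>A" using bM \<open>(a,b)\<notin>R\<close> by auto
        fix a' assume "(a',b)\<in>(M-R)\<union>A"
        then show "a'=a"
        proof
          assume "(a',b)\<in>M-R"
          then show ?thesis using bM pm_right_unique[OF pm, of a' b a] by auto
        next
          assume "(a',b)\<in>A"
          then have "b \<in> snd`A" by force
          then show ?thesis using False sA by auto
        qed
      qed
    qed
  qed
  have "(M - R) \<union> A \<subseteq> edges n m likes" using ME AE by blast
  then show "perfect_matching n m likes ((M - R) \<union> A)"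
    unfolding perfect_matching_def using L Rt by (intro conjI)
qed

lemma swap_weight:
  assumes pm: "perfect_matching n m likes M" and RM: "R \<subseteq> M" and finA: "finite A"
    and disj: "(M-R) \<inter> A = {}"
  shows "matching_weight m vv ((M-R) \<union> A) = matching_weight m vv M - matching_weight m vv R + matching_weight m vv A"
proof -
  have finM: "finite M" using pm_sub[OF pm] edges_finite by (rule finite_subset)
  have finR: "finite R" using finM RM finite_subset by auto
  have "sum (edge_weight m vv) ((M-R) \<union> A) = sum (edge_weight m vv) (M-R) + sum (edge_weight m vv) A"
    by (rule sum.union_disjoint) (use finM finA disj in auto)
  then show ?thesis unfolding matching_weight_def by (simp add: sum_diff[OF finM RM])
qed

lemma vi_facts:
  assumes "y<m" "h<m" "vv y < vv h"
  shows "value_index m vv h < value_index m vv y" "value_index m vv y \<le> num_values m vv"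
proof -
  have fin: "finite (vv ` {0..<m})" by auto
  have "{u \<in> vv ` {0..<m}. vv h \<le> u} \<subset> {u \<in> vv ` {0..<m}. vv y \<le> u}"
    using assms by force
  then show "value_index m vv h < value_index m vv y" unfolding value_index_def
    by (rule psubset_card_mono[rotated]) (use fin in auto)
  show "value_index m vv y \<le> num_values m vv" unfolding value_index_def num_values_def
    by (rule card_mono[OF fin]) auto
qed

lemma exists_dummy:
  assumes pm: "perfect_matching n m likes M" and ij: "i<n" "i\<noteq>j" and hM: "(h,(j,c'))\<in>M" and hm: "h<m"
  shows "\<exists>z d. (z,(i,d))\<in>M \<and> m \<le> z \<and> 1\<le>d \<and> d\<le>m"
proof (rule ccontr)
  assume neg: "\<not> ?thesis"
  define p where "p d = (THE a. (a,(i,d))\<in>M)" for d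
  have pM: "(p d,(i,d))\<in>M" if dm: "d\<in>{1..m}" for d
  proof -
    obtain a where "(a,(i,d))\<in>M" using pm_right_ex[OF pm ij(1), of d] dm by auto
    moreover have "(a',(i,d))\<in>M \<Longrightarrow> a' = a" for a' using pm_right_unique[OF pm] calculation by blast
    ultimately show ?thesis unfolding p_def by (metis (no_types, lifting) theI)
  qed
  have plt: "p d < m" if "d\<in>{1..m}" for d using pM[OF that] neg that by (metis atLeastAtMost_iff not_le)
  have inj: "inj_on p {1..m}"
  proof (rule inj_onI)
    fix d d' assume a: "d\<in>{1..m}" "d'\<in>{1..m}" "p d = p d'"
    have "(p d, (i,d)) \<in> M" using pM a(1) .
    moreover have "(p d', (i,d')) \<in> M" using pM a(2) .
    ultimately have "(p d, (i,d')) \<in> M" "(p d, (i,d)) \<in> M" using a(3) by simp_all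
    then show "d=d'" using pm_left_unique[OF pm, of "p d" "(i,d)" "(i,d')"] by auto
  qed
  have "p`{1..m} = {0..<m}"
    by (rule card_subset_eq) (use plt card_image[OF inj] in auto)
  then obtain d where "d\<in>{1..m}" "h = p d" using hm by (metis atLeastLessThan_iff imageE zero_le)
  then have "(h,(i,d))\<in>M" using pM by auto
  then show False using pm_left_unique[OF pm hM] ij by auto
qed

lemma claimA:
  assumes pos: "\<forall>g<m. vv g > 0" and maxM: "max_weight_perfect_matching n m likes vv M"
    and ij: "i<n" "j<n" "i\<noteq>j" and hM: "(h,(j,Suc c))\<in>M" and hm: "h<m" and lh: "likes i h"
    and c1: "1 \<le> c"
  shows "\<exists>y. (y,(i,c))\<in>M \<and> y<m \<and> vv h \<le> vv y"
proof (rule ccontr)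
  assume neg: "\<not> ?thesis"
  have pm: "perfect_matching n m likes M" using maxM by (simp add: max_weight_perfect_matching_def)
  have maxi: "\<And>M'. perfect_matching n m likes M' \<Longrightarrow> matching_weight m vv M' \<le> matching_weight m vv M"
    using maxM by (simp add: max_weight_perfect_matching_def)
  have cm: "Suc c \<le> m" using pm_edges[OF pm hM] by auto
  have m2: "m \<ge> 2" using c1 cm by auto
  obtain y where yM: "(y,(i,c))\<in>M" using pm_right_ex[OF pm ij(1) c1] cm by auto
  have ye: "(y<m \<and> likes i y) \<or> (m \<le> y \<and> y < m*n)" using pm_edges[OF pm yM] by auto
  define W where "W g = real m ^ (num_values m vv - value_index m vv g)" for g
  have Wpos: "W g > 0" for g using m2 by (simp add: W_def)
  have ew: "edge_weight m vv (g,(k,d)) = (if g<m then - (W g * real d) else 0)" for g k d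
    by (simp add: edge_weight_def W_def)
  have hy: "h \<noteq> y" using pm_left_unique[OF pm hM, of "(i,c)"] yM ij by auto
  have hmn: "h < m*n" using lt_mn[OF hm ij(1)] .
  show False
  proof (cases "y<m")
    case False
    define R where "R = {(h,(j,Suc c)), (y,(i,c))}"
    define A where "A = {(h,(i,c)), (y,(j,Suc c))}"
    have RM: "R \<subseteq> M" using hM yM R_def by auto
    have AE: "A \<subseteq> edges n m likes" unfolding A_def using edges_iff ij lh hm c1 cm ye False by auto
    have fA: "fst`A = fst`R" "snd`A = snd`R" unfolding A_def R_def by auto
    have inj: "inj_on fst A" "inj_on snd A" unfolding A_def using hy ij by auto
    note sw = swap_pm[OF pm RM AE fA inj]
    have "matching_weight m vv ((M-R)\<union>A) = matching_weight m vv M - matching_weight m vv R + matching_weight m vv A"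
      by (rule swap_weight[OF pm RM _ sw(2)]) (simp add: A_def)
    moreover have "matching_weight m vv R = - (W h * real (Suc c))"
      unfolding R_def matching_weight_def using hy hm False by (simp add: ew)
    moreover have "matching_weight m vv A = - (W h * real c)"
      unfolding A_def matching_weight_def using hy hm False by (simp add: ew)
    ultimately have "matching_weight m vv ((M-R)\<union>A) = matching_weight m vv M + W h"
      by (simp add: algebra_simps)
    then show False using maxi[OF sw(1)] Wpos[of h] by linarith
  next
    case True
    then have vy: "vv y < vv h" using neg yM by auto
    note vi = vi_facts[OF True hm vy]
    have "Suc (num_values m vv - value_index m vv y) \<le> num_values m vv - value_index m vv h"
      using vi by linarith
    then have "real m ^ Suc (num_values m vv - value_index m vv y) \<le> W h"
      unfolding W_def by (rule power_increasing) (use m2 in auto)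
    then have Wyh: "real m * W y \<le> W h" by (simp add: W_def)
    obtain z d where zd: "(z,(i,d))\<in>M" "m \<le> z" "1\<le>d" "d\<le>m"
      using exists_dummy[OF pm ij(1) ij(3) hM hm] by auto
    have zmn: "z < m*n" using pm_edges[OF pm zd(1)] zd(2) by auto
    have dc: "d \<noteq> c" using pm_right_unique[OF pm zd(1), of y] yM zd(2) True by auto
    have zh: "z \<noteq> h" "z \<noteq> y" using zd(2) hm True by auto
    have liy: "likes i y" using ye True by auto
    define R where "R = {(h,(j,Suc c)), (y,(i,c)), (z,(i,d))}"
    define A where "A = {(h,(i,c)), (y,(i,d)), (z,(j,Suc c))}"
    have RM: "R \<subseteq> M" using hM yM zd R_def by auto
    have AE: "A \<subseteq> edges n m likes" unfolding A_def
      using edges_iff ij lh hm c1 cm True liy zd zmn by auto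
    have fA: "fst`A = fst`R" "snd`A = snd`R" unfolding A_def R_def by auto
    have inj: "inj_on fst A" "inj_on snd A" unfolding A_def using hy zh ij dc by auto
    note sw = swap_pm[OF pm RM AE fA inj]
    have "matching_weight m vv ((M-R)\<union>A) = matching_weight m vv M - matching_weight m vv R + matching_weight m vv A"
      by (rule swap_weight[OF pm RM _ sw(2)]) (simp add: A_def)
    moreover have "matching_weight m vv R = - (W h * real (Suc c)) - W y * real c"
      unfolding R_def matching_weight_def using hy hm True zh zd(2) by (simp add: ew)
    moreover have "matching_weight m vv A = - (W h * real c) - W y * real d"
      unfolding A_def matching_weight_def using hy hm True zh zd(2) by (simp add: ew)
    ultimately have eq: "matching_weight m vv ((M-R)\<union>A) = matching_weight m vv M + W h + W y * real c - W y * real d"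
      by (simp add: algebra_simps)
    have f1: "W y * real d \<le> W y * real m" using zd(4) Wpos[of y] by simp
    have f2: "W y \<le> W y * real c" using c1 Wpos[of y] by simp
    have f3: "W y * real m \<le> W h" using Wyh by (simp add: mult.commute)
    have "matching_weight m vv ((M-R)\<union>A) > matching_weight m vv M"
      using eq f1 f2 f3 Wpos[of y] by linarith
    then show False using maxi[OF sw(1)] by linarith
  qed
qed


lemma key_ineq:
  assumes pos: "\<forall>g<m. vv g > 0" and maxM: "max_weight_perfect_matching n m likes vv M"
    and ij: "i<n" "j<n" "i\<noteq>j"
  defines "X \<equiv> induced_alloc m M"
  defines "B1 \<equiv> {h \<in> X j. (h,(j,1))\<in>M}"
  shows "bundle_val likes vv i (X j - B1) \<le> bundle_val likes vv i (X i)"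
proof -
  have pm: "perfect_matching n m likes M" using maxM by (simp add: max_weight_perfect_matching_def)
  define T where "T = {h \<in> X j - B1. likes i h}"
  have Xsub: "X k \<subseteq> {0..<m}" for k unfolding X_def induced_alloc_def by auto
  have finX: "finite (X k)" for k using Xsub finite_subset by blast
  have finT: "finite T" unfolding T_def using finX by auto
  have valXi: "val likes vv i g = vv g" if gX: "g \<in> X i" for g
  proof -
    obtain c where gc: "(g,(i,c))\<in>M" "g<m" using gX unfolding X_def induced_alloc_def by auto
    have "likes i g" using pm_edges[OF pm gc(1)] gc(2) by auto
    then show ?thesis by (simp add: val_def)
  qed
  have "bundle_val likes vv i (X j - B1) = sum (val likes vv i) T"
    unfolding bundle_val_def
    by (rule sum.mono_neutral_right) (use finX in \<open>auto simp: T_def val_def\<close>)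
  also have "\<dots> = sum vv T" by (rule sum.cong) (auto simp: T_def val_def)
  finally have eq1: "bundle_val likes vv i (X j - B1) = sum vv T" .
  have ex: "\<forall>h\<in>T. \<exists>y. y \<in> X i \<and> vv h \<le> vv y \<and> (\<exists>c0. (h,(j,Suc c0))\<in>M \<and> (y,(i,c0))\<in>M)"
  proof
    fix h assume hT: "h\<in>T"
    then obtain c where hc: "(h,(j,c))\<in>M" "h<m" "likes i h" "(h,(j,1))\<notin>M"
      unfolding T_def X_def B1_def induced_alloc_def by auto
    have "1 \<le> c" "c \<le> m" using pm_edges[OF pm hc(1)] by auto
    moreover have "c \<noteq> 1" using hc(1,4) by auto
    ultimately have c0: "c = Suc (c - 1)" "1 \<le> c - 1" by arith+
    define c0 where "c0 = c - 1"
    note c0 = c0[folded c0_def]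
    obtain y where y: "(y,(i,c0))\<in>M" "y<m" "vv h \<le> vv y"
      using claimA[OF pos maxM ij _ hc(2) hc(3) c0(2)] hc(1) c0(1) by auto
    have "y \<in> X i" unfolding X_def induced_alloc_def using y by auto
    then show "\<exists>y. y \<in> X i \<and> vv h \<le> vv y \<and> (\<exists>c0. (h,(j,Suc c0))\<in>M \<and> (y,(i,c0))\<in>M)"
      using y hc(1) c0(1) by auto
  qed
  then obtain \<phi> where phi: "\<forall>h\<in>T. \<phi> h \<in> X i \<and> vv h \<le> vv (\<phi> h) \<and> (\<exists>c0. (h,(j,Suc c0))\<in>M \<and> (\<phi> h,(i,c0))\<in>M)"
    by (metis (no_types, lifting))
  have inj: "inj_on \<phi> T"
  proof (rule inj_onI)
    fix h h' assume a: "h\<in>T" "h'\<in>T" "\<phi> h = \<phi> h'"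
    obtain c0 where c0: "(h,(j,Suc c0))\<in>M" "(\<phi> h,(i,c0))\<in>M" using phi a(1) by blast
    obtain c1 where c1: "(h',(j,Suc c1))\<in>M" "(\<phi> h',(i,c1))\<in>M" using phi a(2) by blast
    have "(\<phi> h,(i,c1))\<in>M" using c1(2) a(3) by simp
    then have "(i,c0) = (i,c1)" using pm_left_unique[OF pm c0(2)] by blast
    then have "c0 = c1" by simp
    then show "h = h'" using pm_right_unique[OF pm c0(1)] c1(1) by blast
  qed
  have "sum vv T \<le> sum (vv \<circ> \<phi>) T" by (rule sum_mono) (use phi in auto)
  also have "\<dots> = sum vv (\<phi> ` T)" by (rule sum.reindex[symmetric, OF inj])
  also have "\<dots> \<le> sum vv (X i)"
  proof (rule sum_mono2[OF finX])
    show "\<phi> ` T \<subseteq> X i" using phi by auto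
    show "\<And>b. b \<in> X i - \<phi> ` T \<Longrightarrow> 0 \<le> vv b" using Xsub pos by (meson DiffD1 atLeastLessThan_iff less_imp_le subsetD)
  qed
  also have "\<dots> = bundle_val likes vv i (X i)" unfolding bundle_val_def
    by (rule sum.cong) (auto simp: valXi)
  finally show ?thesis using eq1 by simp
qed

theorem mainTheorem10:
  fixes n m :: nat and likes :: "nat \<Rightarrow> nat \<Rightarrow> bool" and vv :: "nat \<Rightarrow> real"
    and M :: "(nat \<times> (nat \<times> nat)) set"
  assumes pos: "\<forall>g<m. vv g > 0"
    and liked: "\<forall>g<m. \<exists>i<n. likes i g"
    and maxM: "max_weight_perfect_matching n m likes vv M"
  shows "EF1 n likes vv (induced_alloc m M)"
  unfolding EF1_def
proof (intro allI impI)
  fix i j assume ij: "i<n" "j<n"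
  have pm: "perfect_matching n m likes M" using maxM by (simp add: max_weight_perfect_matching_def)
  define X where "X = induced_alloc m M"
  define B1 where "B1 = {h \<in> X j. (h,(j,1))\<in>M}"
  show "bundle_val likes vv i (induced_alloc m M i) \<ge> bundle_val likes vv i (induced_alloc m M j) \<or>
        (\<exists>g\<in>induced_alloc m M j. bundle_val likes vv i (induced_alloc m M i) \<ge> bundle_val likes vv i (induced_alloc m M j - {g}))"
  proof (cases "i = j")
    case True then show ?thesis by simp
  next
    case False
    have K: "bundle_val likes vv i (X j - B1) \<le> bundle_val likes vv i (X i)"
      using key_ineq[OF pos maxM ij False] unfolding X_def B1_def by simp
    show ?thesis
    proof (cases "B1 = {}")
      case True
      then show ?thesis using K unfolding X_def by simp
    next
      case False
      then obtain h1 where h1: "h1 \<in> B1" by auto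
      have "B1 = {h1}"
      proof
        show "B1 \<subseteq> {h1}"
        proof
          fix h assume "h \<in> B1"
          then have "(h,(j,1))\<in>M" "(h1,(j,1))\<in>M" using h1 unfolding B1_def by auto
          then show "h \<in> {h1}" using pm_right_unique[OF pm] by blast
        qed
      qed (use h1 in auto)
      moreover have "h1 \<in> X j" using h1 unfolding B1_def by auto
      ultimately show ?thesis using K unfolding X_def by auto
    qed
  qed
qed

end
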